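(* Assume $a,a'\in[0.4,0.58]$ and $c,c'>0$. Then $$\big\|\log|T_{a,b,c}'|-\log|T_{a',b',c'}'|\big\|_{L^1([0,1])}\le|a-a'|\,(3-2\log|a-a'|)+0.7\,\frac{|c-c'|}{\min(c,c')}.$$
   Context: $T_{a,b,c}(x)=(a+(x-\tfrac18)^{1/3})e^{-x}+b$ for $0\le x\le0.3$ and $T_{a,b,c}(x)=c(10xe^{-10x/3})^{19}+b$ for $0.3\le x\le1$, with $(\cdot)^{1/3}$ the real cube root; $T'_{a,b,c}$ denotes its derivative where it exists (almost everywhere). *)

theory Defs
  imports "HOL-Analysis.Analysis"
begin

text \<open>The map T_{a,b,c}; the two pieces agree on their overlap convention at x = 0.3
  only up to a null set, which is irrelevant for the L1 statement.\<close>
definition T :: "real \<Rightarrow> real \<Rightarrow> real \<Rightarrow> real \<Rightarrow> real" where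
  "T a b c x = (if x \<le> 3/10 then (a + root 3 (x - 1/8)) * exp (- x) + b
                else c * (10 * x * exp (- 10 * x / 3)) ^ 19 + b)"

end

theory Submission
  imports Defs
begin

definition gg :: "real \<Rightarrow> real" where
  "gg x = 1 / (3 * (root 3 (x - 1/8))^2) - root 3 (x - 1/8)"

lemma deriv_T_left:
  assumes "x < 3/10" "x \<noteq> 1/8"
  shows "deriv (T a b c) x = exp (- x) * (gg x - a)"
proof -
  have u: "x - 1/8 \<noteq> 0" using assms by simp
  have r: "root 3 (x - 1/8) \<noteq> 0" using u by simp
  have d: "DERIV (root 3) (x - 1/8) :> inverse (3 * root 3 (x - 1/8) ^ 2)"
    by (rule DERIV_real_root_generic) (use u in auto)
  have dr: "((\<lambda>z. root 3 (z - 1/8)) has_real_derivative inverse (3 * root 3 (x - 1/8) ^ 2) * 1) (at x)"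
    by (rule DERIV_chain2[where g="\<lambda>x. x - 1/8", OF d]) (auto intro!: derivative_eq_intros)
  have "((\<lambda>x. (a + root 3 (x - 1/8)) * exp (- x) + b) has_real_derivative
      (0 + inverse (3 * root 3 (x - 1/8) ^ 2) * 1) * exp (- x) + (a + root 3 (x - 1/8)) * (exp (-x) * (- 1)) + 0) (at x)"
  proof -
    have e: "((\<lambda>x. exp (- x)) has_real_derivative exp (-x) * (- 1)) (at x)"
      by (auto intro!: derivative_eq_intros)
    have l: "((\<lambda>x. a + root 3 (x - 1/8)) has_real_derivative 0 + inverse (3 * root 3 (x - 1/8) ^ 2) * 1) (at x)"
      by (rule DERIV_add[OF DERIV_const dr])
    have m: "((\<lambda>x. (a + root 3 (x - 1/8)) * exp (- x)) has_real_derivative (0 + inverse (3 * root 3 (x - 1/8) ^ 2) * 1) * exp (- x) + (a + root 3 (x - 1/8)) * (exp (-x) * (- 1))) (at x)"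
      using DERIV_mult[OF l e] by (simp add: algebra_simps)
    show ?thesis using DERIV_add[OF m DERIV_const[of b]] by simp
  qed
  moreover have "(0 + inverse (3 * root 3 (x - 1/8) ^ 2) * 1) * exp (- x) + (a + root 3 (x - 1/8)) * (exp (-x) * (- 1)) + 0
     = exp (- x) * (gg x - a)"
    by (simp add: gg_def field_simps)
  ultimately have "((\<lambda>x. (a + root 3 (x - 1/8)) * exp (- x) + b) has_real_derivative exp (- x) * (gg x - a)) (at x)"
    by simp
  then have "(T a b c has_real_derivative exp (- x) * (gg x - a)) (at x)"
    by (rule has_field_derivative_transform_within_open[where S="{..<3/10}"]) (use assms in \<open>auto simp: T_def\<close>)
  then show ?thesis by (rule DERIV_imp_deriv)
qed

definition DD :: "real \<Rightarrow> real" where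
  "DD x = 19 * (10 * x * exp (- 10 * x / 3)) ^ 18 * (10 * exp (- 10 * x / 3) * (1 - 10 * x / 3))"

lemma deriv_T_right:
  assumes "x > 3/10"
  shows "deriv (T a b c) x = c * DD x"
proof -
  have "((\<lambda>x. c * (10 * x * exp (- 10 * x / 3)) ^ 19 + b) has_real_derivative c * DD x) (at x)"
    unfolding DD_def
    by (rule derivative_eq_intros refl | simp add: field_simps)+
  then have "(T a b c has_real_derivative c * DD x) (at x)"
    by (rule has_field_derivative_transform_within_open[where S="{3/10<..}"]) (use assms in \<open>auto simp: T_def\<close>)
  then show ?thesis by (rule DERIV_imp_deriv)
qed

lemma DD_nz: "x > 3/10 \<Longrightarrow> DD x \<noteq> 0"
  by (simp add: DD_def)

lemma slope_r:
  fixes r1 r2 :: real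
  assumes "0 < r1" "r1 \<le> r2" "r2 \<le> 14/25"
  shows "(1/(3*r1^2) - r1) - (1/(3*r2^2) - r2) \<ge> 4 * (r2^3 - r1^3)"
proof -
  define s :: real where "s = 14/25"
  have r2p: "0 < r2" using assms by simp
  have r1s: "r1 \<le> s" and r2s: "r2 \<le> s" using assms by (auto simp: s_def)
  have q1: "r1^2 \<le> s^2" and q2: "r2^2 \<le> s^2" using r1s r2s assms by (auto intro!: power_mono)
  have "r1 * r2^2 \<le> s * s^2" by (rule mult_mono[OF r1s q2]) (use assms in \<open>auto simp: s_def\<close>)
  then have A: "r1 * r2^2 \<le> s^3" by (simp add: power3_eq_cube power2_eq_square)
  have "r1^2 * r2 \<le> s^2 * s" by (rule mult_mono[OF q1 r2s]) (use assms in \<open>auto simp: s_def\<close>)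
  then have B: "r1^2 * r2 \<le> s^3" by (simp add: power3_eq_cube power2_eq_square)
  have A': "1/(r1 * r2^2) \<ge> 1/s^3" using A assms r2p by (intro divide_left_mono) (auto simp: s_def)
  have B': "1/(r1^2 * r2) \<ge> 1/s^3" using B assms r2p by (intro divide_left_mono) (auto simp: s_def)
  have C: "(1/(r1 * r2^2) + 1/(r1^2 * r2))/3 + 1 \<ge> 4 * (r1^2 + r1*r2 + r2^2)"
  proof -
    have "r1*r2 \<le> s^2" using mult_mono[OF r1s r2s] assms by (simp add: power2_eq_square s_def)
    then have "4 * (r1^2 + r1*r2 + r2^2) \<le> 4 * (3 * s^2)"
      using q1 q2 by simp
    also have "\<dots> \<le> (1/s^3 + 1/s^3)/3 + 1" by (simp add: s_def power2_eq_square power3_eq_cube)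
    also have "\<dots> \<le> (1/(r1 * r2^2) + 1/(r1^2 * r2))/3 + 1" using A' B' by simp
    finally show ?thesis .
  qed
  have E1: "(1/(3*r1^2) - r1) - (1/(3*r2^2) - r2) = (r2 - r1) * ((1/(r1 * r2^2) + 1/(r1^2 * r2))/3 + 1)"
    using assms r2p by (simp add: field_simps power2_eq_square)
  have E2: "4 * (r2^3 - r1^3) = (r2 - r1) * (4 * (r1^2 + r1*r2 + r2^2))"
    by (simp add: algebra_simps power2_eq_square power3_eq_cube)
  show ?thesis unfolding E1 E2 using C assms by (intro mult_left_mono) auto
qed

lemma root3_bound: "root 3 (7/40) \<le> (14/25::real)"
proof -
  have "root 3 (7/40) \<le> root 3 ((14/25::real)^3)" by (simp add: power3_eq_cube)
  moreover have "root 3 ((14/25::real)^3) = 14/25" by (rule odd_real_root_power_cancel) simp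
  ultimately show ?thesis by simp
qed

lemma gg_slope:
  assumes "1/8 < x1" "x1 \<le> x2" "x2 \<le> 3/10"
  shows "gg x1 - gg x2 \<ge> 4 * (x2 - x1)"
proof -
  define r1 where "r1 = root 3 (x1 - 1/8)"
  define r2 where "r2 = root 3 (x2 - 1/8)"
  have "0 < r1" unfolding r1_def using assms by (simp add: real_root_gt_zero)
  moreover have "r1 \<le> r2" unfolding r1_def r2_def using assms by simp
  moreover have "r2 \<le> 14/25"
  proof -
    have "r2 \<le> root 3 (7/40)" unfolding r2_def using assms by simp
    then show ?thesis using root3_bound by linarith
  qed
  ultimately have "(1/(3*r1^2) - r1) - (1/(3*r2^2) - r2) \<ge> 4 * (r2^3 - r1^3)" by (rule slope_r)
  moreover have "r1^3 = x1 - 1/8" "r2^3 = x2 - 1/8" unfolding r1_def r2_def by (simp_all add: odd_real_root_pow)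
  ultimately show ?thesis by (simp add: gg_def r1_def[symmetric] r2_def[symmetric])
qed

lemma gg_slope_abs:
  assumes "1/8 < x1" "x1 \<le> 3/10" "1/8 < x2" "x2 \<le> 3/10"
  shows "\<bar>gg x1 - gg x2\<bar> \<ge> 4 * \<bar>x1 - x2\<bar>"
proof (cases "x1 \<le> x2")
  case True then show ?thesis using gg_slope[of x1 x2] assms by simp
next
  case False then show ?thesis using gg_slope[of x2 x1] assms by simp
qed

lemma gg_cont: "continuous_on {x. 1/8 < x} gg"
  unfolding gg_def by (intro continuous_intros) (auto simp: real_root_gt_zero)

lemma exists_p:
  assumes "s \<le> 30"
  shows "\<exists>p\<in>{1/8..3/10}. \<forall>x\<in>{1/8<..3/10}. \<bar>gg x - s\<bar> \<ge> 4 * \<bar>x - p\<bar>"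
proof (cases "s \<le> gg (3/10)")
  case True
  show ?thesis
  proof (intro bexI[of _ "3/10"] ballI)
    fix x :: real assume x: "x \<in> {1/8<..3/10}"
    have "gg x - gg (3/10) \<ge> 4 * (3/10 - x)" using gg_slope[of x "3/10"] x by simp
    then show "\<bar>gg x - s\<bar> \<ge> 4 * \<bar>x - 3/10\<bar>" using True x by simp
  qed simp
next
  case False
  define x0 :: real where "x0 = 1/8 + 1/1000"
  have "root 3 (x0 - 1/8) = root 3 ((1/10)^3)" by (simp add: x0_def power3_eq_cube)
  moreover have "root 3 ((1/10::real)^3) = 1/10" by (rule odd_real_root_power_cancel) simp
  ultimately have r0: "root 3 (x0 - 1/8) = 1/10" by simp
  have g0: "gg x0 = 100/3 - 1/10" unfolding gg_def r0 by (simp add: power2_eq_square)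
  have "continuous_on {x0..3/10} gg"
    by (rule continuous_on_subset[OF gg_cont]) (auto simp: x0_def)
  then have "\<exists>x. x0 \<le> x \<and> x \<le> 3/10 \<and> gg x = s"
    by (intro IVT2') (use False g0 assms in \<open>auto simp: x0_def\<close>)
  then obtain p where p: "x0 \<le> p" "p \<le> 3/10" "gg p = s" by blast
  show ?thesis
  proof (intro bexI[of _ p] ballI)
    fix x :: real assume x: "x \<in> {1/8<..3/10}"
    show "\<bar>gg x - s\<bar> \<ge> 4 * \<bar>x - p\<bar>" using gg_slope_abs[of x p] x p by (auto simp: x0_def)
  qed (use p in \<open>auto simp: x0_def\<close>)
qed

lemma gg_left:
  assumes "0 \<le> x" "x < 1/8"
  shows "gg x \<ge> 4/3"
proof -
  define r where "r = root 3 (x - 1/8)"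
  have r0: "r < 0" unfolding r_def using assms by simp
  have "root 3 (-1/8) \<le> r" unfolding r_def using assms by simp
  moreover have "root 3 ((-1/2::real)^3) = -1/2" by (rule odd_real_root_power_cancel) simp
  then have "root 3 (-1/8) = (-1/2::real)" by (simp add: power3_eq_cube)
  ultimately have "-1/2 \<le> r" by simp
  then have "(-r)*(-r) \<le> (1/2)*(1/2)" using r0 by (intro mult_mono) auto
  then have "r^2 \<le> 1/4" by (simp add: power2_eq_square)
  then have "1/(3*r^2) \<ge> 4/3" using r0 by (simp add: field_simps)
  then show ?thesis using r0 by (simp add: gg_def r_def[symmetric])
qed

definition kk :: "real \<Rightarrow> real \<Rightarrow> real" where
  "kk d s = (if 4 * s < d then (- ln d - 2) + sqrt d / sqrt s else d / (4 * s))"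

lemma ln_quarter: "ln (1/4::real) \<le> -1"
proof -
  have "exp 1 \<le> (4::real)" using exp_le by simp
  then have "1 \<le> ln (4::real)" by (metis ln_exp ln_le_cancel_iff exp_gt_zero zero_less_numeral)
  then show ?thesis by (simp add: ln_div)
qed

lemma lnd_le: fixes d :: real assumes "0 < d" "d \<le> 1/4" shows "ln d \<le> -1"
proof -
  have "ln d \<le> ln (1/4)" using assms by simp
  then show ?thesis using ln_quarter by linarith
qed

lemma kk_small:
  assumes d: "0 < d" "d \<le> 1/4" and s: "0 < s" "4 * s \<le> t" "t < d"
  shows "- ln t \<le> kk d s" and "1 \<le> kk d s"
proof -
  have sm: "4 * s < d" using s by simp
  define z where "z = sqrt (d / (4 * s))"
  have z1: "1 \<le> z" unfolding z_def using sm s by simp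
  have zz: "z^2 = d / (4 * s)" unfolding z_def using d s by simp
  have "ln (z^2) \<le> 2 * (z - 1)" using ln_le_minus_one[of z] z1 by (simp add: ln_realpow)
  then have L: "ln (d / (4 * s)) \<le> 2 * z - 2" using zz by simp
  have "sqrt d / sqrt s = 2 * z" unfolding z_def using s d
    by (simp add: real_sqrt_divide real_sqrt_mult)
  then have kv: "kk d s = - ln d - 2 + 2 * z" using sm by (simp add: kk_def)
  have "ln (d / (4 * s)) = ln d - ln (4 * s)" using d s by (simp add: ln_div)
  moreover have "ln (4 * s) \<le> ln t" using s by simp
  ultimately show "- ln t \<le> kk d s" using L kv by linarith
  show "1 \<le> kk d s" using kv z1 lnd_le[OF d] by linarith
qed


lemma kk_nonneg:
  assumes d: "0 < d" "d \<le> 1/4" and s: "0 < s"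
  shows "0 \<le> kk d s"
proof (cases "4 * s < d")
  case True then show ?thesis using kk_small(2)[OF d s order_refl True] by simp
next
  case False then show ?thesis using d s by (simp add: kk_def)
qed

lemma kk_large:
  assumes d: "0 < d" "d \<le> 1/4" and s: "0 < s" "4 * s \<le> t" "d \<le> t"
  shows "d / t \<le> kk d s"
proof (cases "4 * s < d")
  case True
  have "d / t \<le> 1" using d s by simp
  then show ?thesis using kk_small(2)[OF d s(1) order_refl True] by simp
next
  case False
  then have "kk d s = d / (4 * s)" by (simp add: kk_def)
  then show ?thesis using d s by (simp add: frac_le)
qed

lemma pointwise:
  fixes y a a' s1 s2 :: real
  assumes aa: "a < a'" "a' - a \<le> 1/4" and ya: "y \<noteq> a" "y \<noteq> a'"
    and s1: "0 < s1" "4 * s1 \<le> \<bar>y - a\<bar>" and s2: "0 < s2" "4 * s2 \<le> \<bar>y - a'\<bar>"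
  shows "\<bar>ln \<bar>y - a\<bar> - ln \<bar>y - a'\<bar>\<bar> \<le> kk (a' - a) s1 + kk (a' - a) s2"
proof -
  define d where "d = a' - a"
  have d: "0 < d" "d \<le> 1/4" using aa by (auto simp: d_def)
  have n1: "0 \<le> kk d s1" by (rule kk_nonneg[OF d s1(1)])
  have n2: "0 \<le> kk d s2" by (rule kk_nonneg[OF d s2(1)])
  consider "a' + d \<le> y" | "a' < y" "y < a' + d" | "a < y" "y < a'" | "a - d < y" "y < a" | "y \<le> a - d"
    using ya by linarith
  then have "\<bar>ln \<bar>y - a\<bar> - ln \<bar>y - a'\<bar>\<bar> \<le> kk d s1 + kk d s2"
  proof cases
    case 1
    have p: "0 < y - a'" "y - a' < y - a" using 1 d by (auto simp: d_def)
    have "ln (y - a) - ln (y - a') = ln ((y - a) / (y - a'))" using p by (simp add: ln_div)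
    also have "\<dots> \<le> (y - a) / (y - a') - 1" using p by (intro ln_le_minus_one) simp
    also have "\<dots> = d / (y - a')" using p by (simp add: field_simps d_def)
    finally have u: "ln (y - a) - ln (y - a') \<le> d / (y - a')" .
    have "0 \<le> ln (y - a) - ln (y - a')" using p by simp
    moreover have "d / (y - a') \<le> kk d s2" using kk_large[OF d s2(1), of "y - a'"] s2 p 1 by simp
    ultimately show ?thesis using u p n1 by simp
  next
    case 2
    have p: "0 < y - a'" "y - a' < y - a" "y - a \<le> 1" using 2 d by (auto simp: d_def)
    have l: "ln (y - a) \<le> 0" using p by simp
    have k: "- ln (y - a') \<le> kk d s2" using kk_small(1)[OF d s2(1), of "y - a'"] s2 p 2 by (simp add: d_def)
    have "0 \<le> ln (y - a) - ln (y - a')" using p by simp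
    then have "\<bar>ln \<bar>y - a\<bar> - ln \<bar>y - a'\<bar>\<bar> = ln (y - a) - ln (y - a')" using p by simp
    then show ?thesis using l k n1 by linarith
  next
    case 3
    have p: "0 < y - a" "y - a < d" "0 < a' - y" "a' - y < d" using 3 by (auto simp: d_def)
    have l1: "ln (y - a) \<le> 0" and l2: "ln (a' - y) \<le> 0" using p d by auto
    have k1: "- ln (y - a) \<le> kk d s1" using kk_small(1)[OF d s1(1), of "y - a"] s1 p 3 by simp
    have k2: "- ln (a' - y) \<le> kk d s2" using kk_small(1)[OF d s2(1), of "a' - y"] s2 p 3 by simp
    have "\<bar>ln \<bar>y - a\<bar> - ln \<bar>y - a'\<bar>\<bar> = \<bar>ln (y - a) - ln (a' - y)\<bar>" using 3 by (simp add: abs_minus_commute)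
    then show ?thesis using l1 l2 k1 k2 by linarith
  next
    case 4
    have p: "0 < a - y" "a - y < a' - y" "a' - y \<le> 1" using 4 d by (auto simp: d_def)
    have l: "ln (a' - y) \<le> 0" using p by simp
    have k: "- ln (a - y) \<le> kk d s1" using kk_small(1)[OF d s1(1), of "a - y"] s1 p 4 by (simp add: d_def)
    have "0 \<le> ln (a' - y) - ln (a - y)" using p by simp
    then have "\<bar>ln \<bar>y - a\<bar> - ln \<bar>y - a'\<bar>\<bar> = ln (a' - y) - ln (a - y)" using p 4 by (simp add: abs_minus_commute)
    then show ?thesis using l k n2 by linarith
  next
    case 5
    have p: "0 < a - y" "a - y < a' - y" using 5 d by (auto simp: d_def)
    have "ln (a' - y) - ln (a - y) = ln ((a' - y) / (a - y))" using p by (simp add: ln_div)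
    also have "\<dots> \<le> (a' - y) / (a - y) - 1" using p by (intro ln_le_minus_one) simp
    also have "\<dots> = d / (a - y)" using p by (simp add: field_simps d_def)
    finally have u: "ln (a' - y) - ln (a - y) \<le> d / (a - y)" .
    have "0 \<le> ln (a' - y) - ln (a - y)" using p by simp
    moreover have "d / (a - y) \<le> kk d s1" using kk_large[OF d s1(1), of "a - y"] s1 p 5 by simp
    ultimately show ?thesis using u p n2 5 by simp
  qed
  then show ?thesis by (simp add: d_def)
qed

definition Psi :: "real \<Rightarrow> real \<Rightarrow> real" where
  "Psi d t = (if 4 * t \<le> d then (- ln d - 2) * t + 2 * sqrt d * sqrt t
              else d * (2 - ln d) / 4 + d / 4 * (ln (4 * t) - ln d))"

definition Phi :: "real \<Rightarrow> real \<Rightarrow> real \<Rightarrow> real" where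
  "Phi d p x = (if x \<le> p then - Psi d (p - x) else Psi d (x - p))"

lemma Psi_cont:
  assumes "0 < d"
  shows "continuous_on {0..} (Psi d)"
proof -
  have "continuous_on {0..} (\<lambda>t. if 4 * t \<le> d then (- ln d - 2) * t + 2 * sqrt d * sqrt t
              else d * (2 - ln d) / 4 + d / 4 * (ln (4 * t) - ln d))"
  proof (rule continuous_on_cases_le)
    show "continuous_on {t \<in> {0..}. 4 * t \<le> d} (\<lambda>t. (- ln d - 2) * t + 2 * sqrt d * sqrt t)"
      by (intro continuous_intros)
    show "continuous_on {t \<in> {0..}. d \<le> 4 * t} (\<lambda>t. d * (2 - ln d) / 4 + d / 4 * (ln (4 * t) - ln d))"
      using assms by (intro continuous_intros) auto
    show "continuous_on {0..} (\<lambda>t::real. 4 * t)" by (intro continuous_intros)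
    fix t :: real assume "t \<in> {0..}" "4 * t = d"
    then have t: "t = d / 4" by simp
    have "sqrt d * sqrt (d / 4) = d / 2" using assms by (simp add: real_sqrt_divide)
    then show "(- ln d - 2) * t + 2 * sqrt d * sqrt t = d * (2 - ln d) / 4 + d / 4 * (ln (4 * t) - ln d)"
      unfolding t by (simp add: algebra_simps)
  qed
  then show ?thesis unfolding Psi_def .
qed

lemma Psi_deriv:
  assumes d: "0 < d" and t: "0 < t" "4 * t \<noteq> d"
  shows "(Psi d has_real_derivative kk d t) (at t)"
proof (cases "4 * t < d")
  case True
  have D: "((\<lambda>t. (- ln d - 2) * t + 2 * sqrt d * sqrt t) has_real_derivative
          (- ln d - 2) * 1 + 2 * sqrt d * (inverse (sqrt t) / 2)) (at t)"
  proof -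
    have s: "(sqrt has_real_derivative inverse (sqrt t) / 2) (at t)" using t(1) by (rule DERIV_real_sqrt)
    have l: "((\<lambda>t. (- ln d - 2) * t) has_real_derivative (- ln d - 2) * 1) (at t)"
      by (intro DERIV_cmult DERIV_ident)
    have r: "((\<lambda>t. 2 * sqrt d * sqrt t) has_real_derivative 2 * sqrt d * (inverse (sqrt t) / 2)) (at t)"
      by (rule DERIV_cmult[OF s])
    show ?thesis by (rule DERIV_add[OF l r])
  qed
  have E: "(- ln d - 2) * 1 + 2 * sqrt d * (inverse (sqrt t) / 2) = kk d t"
    using True unfolding kk_def by (simp add: field_simps)
  have "((\<lambda>t. (- ln d - 2) * t + 2 * sqrt d * sqrt t) has_real_derivative kk d t) (at t)" using D unfolding E .
  then show ?thesis
    by (rule has_field_derivative_transform_within_open[where S="{..<d/4}"]) (use True in \<open>auto simp: Psi_def\<close>)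
next
  case False
  then have F: "d < 4 * t" using t by simp
  have D: "((\<lambda>t. d * (2 - ln d) / 4 + d / 4 * (ln (4 * t) - ln d)) has_real_derivative
          0 + d / 4 * (inverse (4 * t) * (4 * 1) - 0)) (at t)"
  proof -
    have m: "((\<lambda>t. 4 * t) has_real_derivative 4 * 1) (at t)" by (intro DERIV_cmult DERIV_ident)
    have l: "(ln has_real_derivative inverse (4 * t)) (at (4 * t))" using t by (intro DERIV_ln) simp
    have c: "((\<lambda>t. ln (4 * t)) has_real_derivative inverse (4 * t) * (4 * 1)) (at t)"
      by (rule DERIV_chain2[OF l m])
    have "((\<lambda>t. ln (4 * t) - ln d) has_real_derivative inverse (4 * t) * (4 * 1) - 0) (at t)"
      by (rule DERIV_diff[OF c DERIV_const])
    then have "((\<lambda>t. d / 4 * (ln (4 * t) - ln d)) has_real_derivative d / 4 * (inverse (4 * t) * (4 * 1) - 0)) (at t)"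
      by (rule DERIV_cmult)
    then show ?thesis by (rule DERIV_add[OF DERIV_const])
  qed
  have E: "0 + d / 4 * (inverse (4 * t) * (4 * 1) - 0) = kk d t"
    using F t unfolding kk_def by (simp add: field_simps)
  have "((\<lambda>t. d * (2 - ln d) / 4 + d / 4 * (ln (4 * t) - ln d)) has_real_derivative kk d t) (at t)" using D unfolding E .
  then show ?thesis
    by (rule has_field_derivative_transform_within_open[where S="{d/4<..}"]) (use F in \<open>auto simp: Psi_def\<close>)
qed

lemma Phi_cont:
  assumes "0 < d"
  shows "continuous_on UNIV (Phi d p)"
proof -
  have c: "continuous_on {0..} (Psi d)" by (rule Psi_cont[OF assms])
  have "continuous_on UNIV (\<lambda>x. if x \<le> p then - Psi d (p - x) else Psi d (x - p))"
  proof (rule continuous_on_cases_le)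
    show "continuous_on {x \<in> UNIV. x \<le> p} (\<lambda>x. - Psi d (p - x))"
      by (intro continuous_intros continuous_on_compose2[OF c]) auto
    show "continuous_on {x \<in> UNIV. p \<le> x} (\<lambda>x. Psi d (x - p))"
      by (intro continuous_intros continuous_on_compose2[OF c]) auto
    show "continuous_on UNIV (\<lambda>x::real. x)" by (rule continuous_on_id)
    show "\<And>x. x \<in> UNIV \<Longrightarrow> x = p \<Longrightarrow> - Psi d (p - x) = Psi d (x - p)"
      using assms by (simp add: Psi_def)
  qed
  then show ?thesis unfolding Phi_def .
qed

lemma Phi_deriv:
  assumes d: "0 < d" and x: "x \<noteq> p" "x \<noteq> p - d/4" "x \<noteq> p + d/4"
  shows "(Phi d p has_real_derivative kk d \<bar>x - p\<bar>) (at x)"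
proof (cases "x < p")
  case True
  have "(Psi d has_real_derivative kk d (p - x)) (at (p - x))"
    by (rule Psi_deriv) (use d x True in auto)
  moreover have "((\<lambda>x. p - x) has_real_derivative (0 - 1)) (at x)"
    by (intro derivative_intros)
  ultimately have "((\<lambda>x. Psi d (p - x)) has_real_derivative (kk d (p - x) * (0 - 1))) (at x)"
    by (rule DERIV_chain2)
  then have "((\<lambda>x. - Psi d (p - x)) has_real_derivative - (kk d (p - x) * (0 - 1))) (at x)"
    by (rule DERIV_minus)
  then have "((\<lambda>x. - Psi d (p - x)) has_real_derivative kk d \<bar>x - p\<bar>) (at x)"
    using True by simp
  then show ?thesis
    by (rule has_field_derivative_transform_within_open[where S="{..<p}"]) (use True in \<open>auto simp: Phi_def\<close>)
next
  case False
  then have F: "p < x" using x by simp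
  have "(Psi d has_real_derivative kk d (x - p)) (at (x - p))"
    by (rule Psi_deriv) (use d x F in auto)
  moreover have "((\<lambda>x. x - p) has_real_derivative (1 - 0)) (at x)"
    by (intro derivative_intros)
  ultimately have "((\<lambda>x. Psi d (x - p)) has_real_derivative (kk d (x - p) * (1 - 0))) (at x)"
    by (rule DERIV_chain2)
  then have "((\<lambda>x. Psi d (x - p)) has_real_derivative kk d \<bar>x - p\<bar>) (at x)"
    using F by simp
  then show ?thesis
    by (rule has_field_derivative_transform_within_open[where S="{p<..}"]) (use F in \<open>auto simp: Phi_def\<close>)
qed

lemma kk_integral:
  assumes d: "0 < d"
  shows "((\<lambda>x. kk d \<bar>x - p\<bar>) has_integral (Phi d p (3/10) - Phi d p (1/8))) {1/8..3/10}"
proof (rule fundamental_theorem_of_calculus_interior_strong[where S="{p, p - d/4, p + d/4}"])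
  show "continuous_on {1/8..3/10} (Phi d p)"
    using Phi_cont[OF d] by (rule continuous_on_subset) simp
  fix x assume "x \<in> {1/8<..<3/10} - {p, p - d/4, p + d/4}"
  then show "(Phi d p has_vector_derivative kk d \<bar>x - p\<bar>) (at x)"
    using Phi_deriv[OF d, of x p] by (simp add: has_real_derivative_iff_has_vector_derivative)
qed auto

lemma Psi_mono_small:
  assumes d: "0 < d" "d \<le> 1/4" and tu: "0 \<le> t" "t \<le> u" "4 * u \<le> d"
  shows "Psi d t \<le> Psi d u"
proof -
  define c where "c = - ln d - 2"
  define \<alpha> where "\<alpha> = sqrt t"
  define \<beta> where "\<beta> = sqrt u"
  have ab: "0 \<le> \<alpha>" "\<alpha> \<le> \<beta>" using tu by (auto simp: \<alpha>_def \<beta>_def)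
  have "sqrt (4 * u) \<le> sqrt d" using tu by simp
  then have b2: "2 * \<beta> \<le> sqrt d" by (simp add: \<beta>_def real_sqrt_mult)
  have tt: "t = \<alpha>^2" "u = \<beta>^2" using tu by (auto simp: \<alpha>_def \<beta>_def)
  have ln1: "ln d \<le> -1" by (rule lnd_le[OF d])
  have key: "0 \<le> c * (\<alpha> + \<beta>) + 2 * sqrt d"
  proof (cases "0 \<le> c")
    case True then show ?thesis using ab d by (intro add_nonneg_nonneg mult_nonneg_nonneg) auto
  next
    case False
    have "c * sqrt d \<le> c * (\<alpha> + \<beta>)" using False ab b2 by (intro mult_left_mono_neg) auto
    moreover have "0 \<le> (c + 2) * sqrt d" unfolding c_def using ln1 d by (intro mult_nonneg_nonneg) auto
    ultimately show ?thesis by (simp add: algebra_simps)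
  qed
  have "Psi d u - Psi d t = (\<beta> - \<alpha>) * (c * (\<alpha> + \<beta>) + 2 * sqrt d)"
    using tu ab by (simp add: Psi_def c_def \<alpha>_def[symmetric] \<beta>_def[symmetric] tt power2_eq_square algebra_simps)
  moreover have "0 \<le> (\<beta> - \<alpha>) * (c * (\<alpha> + \<beta>) + 2 * sqrt d)" using ab key by simp
  ultimately show ?thesis by simp
qed

lemma Psi_quarter:
  assumes "0 < d" shows "Psi d (d/4) = d * (2 - ln d) / 4"
proof -
  have "sqrt d * sqrt (d / 4) = d / 2" using assms by (simp add: real_sqrt_divide)
  then show ?thesis by (simp add: Psi_def algebra_simps)
qed

lemma Psi_mono:
  assumes d: "0 < d" "d \<le> 1/4" and tu: "0 \<le> t" "t \<le> u"
  shows "Psi d t \<le> Psi d u"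
proof (cases "4 * u \<le> d")
  case True then show ?thesis using Psi_mono_small[OF d tu] by simp
next
  case False
  then have u: "d < 4 * u" by simp
  have Pu: "Psi d u = d * (2 - ln d) / 4 + d / 4 * (ln (4 * u) - ln d)" using u by (simp add: Psi_def)
  show ?thesis
  proof (cases "4 * t \<le> d")
    case True
    have "Psi d t \<le> Psi d (d/4)" using Psi_mono_small[OF d tu(1), of "d/4"] True by simp
    also have "\<dots> = d * (2 - ln d) / 4" by (rule Psi_quarter[OF d(1)])
    also have "\<dots> \<le> Psi d u" unfolding Pu using u d by simp
    finally show ?thesis .
  next
    case False
    then have "Psi d t = d * (2 - ln d) / 4 + d / 4 * (ln (4 * t) - ln d)" by (simp add: Psi_def)
    moreover have "ln (4 * t) \<le> ln (4 * u)" using False d tu by simp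
    ultimately show ?thesis unfolding Pu using d by (simp add: mult_left_mono)
  qed
qed

lemma Psi_end:
  assumes d: "0 < d" "d \<le> 1/4"
  shows "Psi d (7/40) \<le> d * (1 - ln d) / 2"
proof -
  have "Psi d (7/40) = d * (2 - ln d) / 4 + d / 4 * (ln (7/10) - ln d)" using d by (simp add: Psi_def)
  also have "\<dots> = d * (1 - ln d) / 2 + d * ln (7/10) / 4" by (simp add: field_simps)
  finally have E: "Psi d (7/40) = d * (1 - ln d) / 2 + d * ln (7/10) / 4" .
  have "d * ln (7/10::real) \<le> 0" using d by (intro mult_nonneg_nonpos) auto
  then show ?thesis using E by linarith
qed

lemma Phi_bound:
  assumes d: "0 < d" "d \<le> 1/4" and p: "1/8 \<le> p" "p \<le> 3/10"
  shows "Phi d p (3/10) - Phi d p (1/8) \<le> d * (1 - ln d)"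
proof -
  have "Phi d p (3/10) \<le> Psi d (7/40)"
  proof (cases "3/10 \<le> p")
    case True then have pp: "p = 3/10" using p by simp
    have "Phi d p (3/10) = - Psi d 0" unfolding Phi_def pp by simp
    also have "\<dots> = Psi d 0" using d by (simp add: Psi_def)
    also have "\<dots> \<le> Psi d (7/40)" by (rule Psi_mono[OF d]) auto
    finally show ?thesis .
  next
    case False
    then have "Phi d p (3/10) = Psi d (3/10 - p)" by (simp add: Phi_def)
    also have "\<dots> \<le> Psi d (7/40)" by (rule Psi_mono[OF d]) (use p False in auto)
    finally show ?thesis .
  qed
  moreover have "- Phi d p (1/8) \<le> Psi d (7/40)"
  proof -
    have "Phi d p (1/8) = - Psi d (p - 1/8)" using p by (simp add: Phi_def)
    moreover have "Psi d (p - 1/8) \<le> Psi d (7/40)" by (rule Psi_mono[OF d]) (use p in auto)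
    ultimately show ?thesis by simp
  qed
  ultimately show ?thesis using Psi_end[OF d] by simp
qed

lemma borel_to_measurable_on:
  fixes f :: "real \<Rightarrow> real"
  assumes "f \<in> borel_measurable borel"
  shows "f measurable_on {l..u}"
proof -
  have "f \<in> borel_measurable lborel" using assms by simp
  then have "f \<in> borel_measurable lebesgue" by (rule measurable_completion)
  then have "f \<in> borel_measurable (lebesgue_on {l..u})" by (rule measurable_restrict_space1)
  then show ?thesis by (simp add: measurable_on_iff_borel_measurable)
qed

lemma bound_helper:
  fixes f g :: "real \<Rightarrow> real"
  assumes f: "f measurable_on {l..u}" and g: "(g has_integral I) {l..u}" and S: "finite S"
    and b: "\<And>x. x \<in> {l..u} - S \<Longrightarrow> \<bar>f x\<bar> \<le> g x"
  shows "f integrable_on {l..u} \<and> integral {l..u} f \<le> I"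
proof -
  define f' where "f' x = (if x \<in> S then 0 else f x)" for x
  define g' where "g' x = (if x \<in> S then 0 else g x)" for x
  have g': "(g' has_integral I) {l..u}"
    by (rule has_integral_spike_finite[OF S _ g]) (simp add: g'_def)
  have f'm: "f' measurable_on {l..u}"
    by (rule measurable_on_spike[OF f negligible_finite[OF S]]) (simp add: f'_def)
  have bb: "\<bar>f' x\<bar> \<le> g' x" if "x \<in> {l..u}" for x
    using b[of x] that by (auto simp: f'_def g'_def)
  have f'i: "f' integrable_on {l..u}"
    by (rule measurable_bounded_by_integrable_imp_integrable_real[where g=g'])
       (use f'm g' bb in \<open>auto simp: measurable_on_iff_borel_measurable\<close>)
  have "integral {l..u} f' \<le> integral {l..u} g'"
    by (rule integral_le[OF f'i]) (use g' bb in \<open>auto intro: abs_le_D1\<close>)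
  also have "\<dots> = I" using g' by (rule integral_unique)
  finally have i: "integral {l..u} f' \<le> I" .
  have "f integrable_on {l..u}"
    by (rule integrable_spike_finite[OF S _ f'i]) (simp add: f'_def)
  moreover have "integral {l..u} f = integral {l..u} f'"
    by (rule integral_spike[OF negligible_finite[OF S]]) (simp add: f'_def)
  ultimately show ?thesis using i by simp
qed

lemma lndiff:
  fixes u v :: real
  assumes "0 < u" "0 < v"
  shows "\<bar>ln u - ln v\<bar> \<le> \<bar>u - v\<bar> / min u v"
proof -
  have *: "ln x - ln y \<le> (x - y) / y" if "0 < y" "y \<le> x" for x y :: real
  proof -
    have "ln x - ln y = ln (x / y)" using that by (simp add: ln_div)
    also have "\<dots> \<le> x / y - 1" using that by (intro ln_le_minus_one) simp
    also have "\<dots> = (x - y) / y" using that by (simp add: field_simps)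
    finally show ?thesis .
  qed
  show ?thesis
  proof (cases "v \<le> u")
    case True
    then show ?thesis using *[of v u] assms by (simp add: min_def)
  next
    case False
    then show ?thesis using *[of u v] assms by (simp add: min_def abs_minus_commute)
  qed
qed

lemma ln_exp_mult:
  fixes x z :: real
  assumes "z \<noteq> 0"
  shows "ln \<bar>exp (- x) * z\<bar> = - x + ln \<bar>z\<bar>"
proof -
  have e: "0 < exp (- x)" by simp
  have z: "0 < \<bar>z\<bar>" using assms by simp
  have m: "ln (exp (- x) * \<bar>z\<bar>) = ln (exp (- x)) + ln \<bar>z\<bar>" using e z by (simp add: ln_mult)
  have "\<bar>exp (- x) * z\<bar> = exp (- x) * \<bar>z\<bar>" by (simp only: abs_mult abs_exp_cancel)
  then show ?thesis using m by simp
qed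

definition EE :: "real \<Rightarrow> real \<Rightarrow> real \<Rightarrow> real" where
  "EE a a' x = \<bar>ln \<bar>exp (- x) * (gg x - a)\<bar> - ln \<bar>exp (- x) * (gg x - a')\<bar>\<bar>"

lemma EE_meas: "EE a a' measurable_on {l..u}"
  by (rule borel_to_measurable_on) (unfold EE_def gg_def, measurable)

lemma EE_simp:
  assumes "gg x \<noteq> a" "gg x \<noteq> a'"
  shows "EE a a' x = \<bar>ln \<bar>gg x - a\<bar> - ln \<bar>gg x - a'\<bar>\<bar>"
  using assms by (simp add: EE_def ln_exp_mult)

lemma piece1:
  assumes "0.4 \<le> a" "a \<le> 0.58" "0.4 \<le> a'" "a' \<le> 0.58"
  shows "EE a a' integrable_on {0..1/8} \<and> integral {0..1/8} (EE a a') \<le> \<bar>a - a'\<bar> / 6"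
proof -
  define d where "d = \<bar>a - a'\<bar>"
  have C: "((\<lambda>x. 4 * d / 3) has_integral (1/8) * (4 * d / 3)) {0..1/8::real}"
    using has_integral_const_real[of "4 * d / 3" 0 "1/8::real"] by simp
  have "EE a a' integrable_on {0..1/8} \<and> integral {0..1/8} (EE a a') \<le> (1/8) * (4 * d / 3)"
  proof (rule bound_helper[OF EE_meas C, of "{1/8}"])
    fix x :: real assume x: "x \<in> {0..1/8} - {1/8}"
    then have g: "gg x \<ge> 4/3" using gg_left[of x] by auto
    have pa: "0 < gg x - a" "0 < gg x - a'" using g assms by auto
    have m: "3/4 \<le> min (gg x - a) (gg x - a')" using g assms by auto
    have "EE a a' x = \<bar>ln (gg x - a) - ln (gg x - a')\<bar>" using pa by (simp add: EE_simp)
    also have "\<dots> \<le> \<bar>(gg x - a) - (gg x - a')\<bar> / min (gg x - a) (gg x - a')" by (rule lndiff[OF pa])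
    also have "\<dots> = d / min (gg x - a) (gg x - a')" by (simp add: d_def abs_minus_commute)
    also have "\<dots> \<le> d / (3/4)" using m by (intro divide_left_mono) (auto simp: d_def)
    finally show "\<bar>EE a a' x\<bar> \<le> 4 * d / 3" by (simp add: EE_def)
  qed simp
  then show ?thesis by (simp add: d_def)
qed

lemma piece2_ord:
  assumes "0.4 \<le> a" "a < a'" "a' \<le> 0.58"
  shows "EE a a' integrable_on {1/8..3/10} \<and> integral {1/8..3/10} (EE a a') \<le> 2 * (a' - a) * (1 - ln (a' - a))"
proof -
  define d where "d = a' - a"
  have d: "0 < d" "d \<le> 1/4" using assms by (auto simp: d_def)
  obtain p where p: "p \<in> {1/8..3/10}" "\<And>x. x \<in> {1/8<..3/10} \<Longrightarrow> \<bar>gg x - a\<bar> \<ge> 4 * \<bar>x - p\<bar>"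
    using exists_p[of a] assms by auto
  obtain p' where p': "p' \<in> {1/8..3/10}" "\<And>x. x \<in> {1/8<..3/10} \<Longrightarrow> \<bar>gg x - a'\<bar> \<ge> 4 * \<bar>x - p'\<bar>"
    using exists_p[of a'] assms by auto
  have G: "((\<lambda>x. kk d \<bar>x - p\<bar> + kk d \<bar>x - p'\<bar>) has_integral
      ((Phi d p (3/10) - Phi d p (1/8)) + (Phi d p' (3/10) - Phi d p' (1/8)))) {1/8..3/10}"
    by (intro has_integral_add kk_integral d)
  have "EE a a' integrable_on {1/8..3/10} \<and> integral {1/8..3/10} (EE a a') \<le>
       (Phi d p (3/10) - Phi d p (1/8)) + (Phi d p' (3/10) - Phi d p' (1/8))"
  proof (rule bound_helper[OF EE_meas G, of "{1/8, 3/10, p, p'}"])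
    fix x :: real assume x: "x \<in> {1/8..3/10} - {1/8, 3/10, p, p'}"
    then have xi: "x \<in> {1/8<..3/10}" by auto
    have s1: "0 < \<bar>x - p\<bar>" "4 * \<bar>x - p\<bar> \<le> \<bar>gg x - a\<bar>" using x p(2)[OF xi] by auto
    have s2: "0 < \<bar>x - p'\<bar>" "4 * \<bar>x - p'\<bar> \<le> \<bar>gg x - a'\<bar>" using x p'(2)[OF xi] by auto
    have ne: "gg x \<noteq> a" "gg x \<noteq> a'" using s1 s2 by auto
    have "EE a a' x = \<bar>ln \<bar>gg x - a\<bar> - ln \<bar>gg x - a'\<bar>\<bar>" using ne by (rule EE_simp)
    also have "\<dots> \<le> kk (a' - a) \<bar>x - p\<bar> + kk (a' - a) \<bar>x - p'\<bar>"
      by (rule pointwise[OF _ _ ne s1 s2]) (use assms in auto)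
    finally show "\<bar>EE a a' x\<bar> \<le> kk d \<bar>x - p\<bar> + kk d \<bar>x - p'\<bar>" by (simp add: EE_def d_def)
  qed simp
  moreover have "Phi d p (3/10) - Phi d p (1/8) \<le> d * (1 - ln d)" using Phi_bound[OF d] p by auto
  moreover have "Phi d p' (3/10) - Phi d p' (1/8) \<le> d * (1 - ln d)" using Phi_bound[OF d] p' by auto
  ultimately have "EE a a' integrable_on {1/8..3/10} \<and> integral {1/8..3/10} (EE a a') \<le> 2 * (d * (1 - ln d))"
    by linarith
  then show ?thesis by (simp only: d_def mult.assoc)
qed

lemma piece2:
  assumes "0.4 \<le> a" "a \<le> 0.58" "0.4 \<le> a'" "a' \<le> 0.58"
  shows "EE a a' integrable_on {1/8..3/10} \<and>
         integral {1/8..3/10} (EE a a') \<le> 2 * \<bar>a - a'\<bar> * (1 - ln \<bar>a - a'\<bar>)"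
proof -
  consider "a < a'" | "a = a'" | "a' < a" by linarith
  then show ?thesis
  proof cases
    case 1 then show ?thesis using piece2_ord[of a a'] assms by simp
  next
    case 2
    then have "EE a a' = (\<lambda>x. 0)" by (simp add: EE_def fun_eq_iff)
    then show ?thesis using 2 integrable_0 by simp
  next
    case 3
    have "EE a a' = EE a' a" by (simp add: EE_def fun_eq_iff abs_minus_commute)
    then show ?thesis using piece2_ord[of a' a] assms 3 by (simp add: abs_minus_commute)
  qed
qed

lemma ln_deriv_right:
  fixes a b c x :: real
  assumes "3/10 < x" "0 < c"
  shows "ln \<bar>deriv (T a b c) x\<bar> = ln c + ln \<bar>DD x\<bar>"
proof -
  have e: "\<bar>deriv (T a b c) x\<bar> = c * \<bar>DD x\<bar>" using deriv_T_right[OF assms(1)] assms by (simp add: abs_mult)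
  have "0 < \<bar>DD x\<bar>" using DD_nz[OF assms(1)] by simp
  then show ?thesis unfolding e using assms by (simp add: ln_mult)
qed

theorem proposition62:
  fixes a a' b b' c c' :: real
  assumes "0.4 \<le> a" "a \<le> 0.58" "0.4 \<le> a'" "a' \<le> 0.58" "c > 0" "c' > 0"
  shows "(\<lambda>x. \<bar>ln \<bar>deriv (T a b c) x\<bar> - ln \<bar>deriv (T a' b' c') x\<bar>\<bar>) integrable_on {0..1} \<and>
         integral {0..1} (\<lambda>x. \<bar>ln \<bar>deriv (T a b c) x\<bar> - ln \<bar>deriv (T a' b' c') x\<bar>\<bar>)
           \<le> \<bar>a - a'\<bar> * (3 - 2 * ln \<bar>a - a'\<bar>) + 0.7 * \<bar>c - c'\<bar> / min c c'"
proof -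
  define F where "F = (\<lambda>x. \<bar>ln \<bar>deriv (T a b c) x\<bar> - ln \<bar>deriv (T a' b' c') x\<bar>\<bar>)"
  define d where "d = \<bar>a - a'\<bar>"
  define K where "K = \<bar>ln c - ln c'\<bar>"
  have FE: "F x = EE a a' x" if "x < 3/10" "x \<noteq> 1/8" for x
    using deriv_T_left[OF that, of a b c] deriv_T_left[OF that, of a' b' c'] by (simp add: F_def EE_def)
  have FK: "F x = K" if "3/10 < x" for x
    using ln_deriv_right[OF that, of c a b] ln_deriv_right[OF that, of c' a' b'] assms
    by (simp add: F_def K_def)
  have P1: "EE a a' integrable_on {0..1/8} \<and> integral {0..1/8} (EE a a') \<le> d / 6"
    using piece1[OF assms(1-4)] by (simp add: d_def)
  have P2: "EE a a' integrable_on {1/8..3/10} \<and> integral {1/8..3/10} (EE a a') \<le> 2 * d * (1 - ln d)"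
    using piece2[OF assms(1-4)] by (simp add: d_def)
  have i1: "F integrable_on {0..1/8}"
    by (rule integrable_spike_finite[where S="{1/8}" and f="EE a a'"]) (use P1 FE in auto)
  have e1: "integral {0..1/8} (EE a a') = integral {0..1/8} F"
    by (rule integral_spike[where S="{1/8}"]) (auto simp: FE)
  have i2: "F integrable_on {1/8..3/10}"
    by (rule integrable_spike_finite[where S="{1/8, 3/10}" and f="EE a a'"]) (use P2 FE in auto)
  have e2: "integral {1/8..3/10} (EE a a') = integral {1/8..3/10} F"
    by (rule integral_spike[where S="{1/8, 3/10}"]) (auto simp: FE)
  have C3: "((\<lambda>x. K) has_integral (7/10) * K) {3/10..1::real}"
    using has_integral_const_real[of K "3/10" "1::real"] by simp
  have h3: "(F has_integral (7/10) * K) {3/10..1}"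
    by (rule has_integral_spike_finite[where S="{3/10}", OF _ _ C3]) (auto simp: FK)
  have i03: "F integrable_on {0..3/10}"
    by (rule Henstock_Kurzweil_Integration.integrable_combine[OF _ _ i1 i2]) auto
  have i01: "F integrable_on {0..1}"
    by (rule Henstock_Kurzweil_Integration.integrable_combine[OF _ _ i03]) (use h3 in auto)
  have s1: "integral {0..1} F = integral {0..3/10} F + integral {3/10..1} F"
    using Henstock_Kurzweil_Integration.integral_combine[OF _ _ i01, of "3/10"] by simp
  have s2: "integral {0..3/10} F = integral {0..1/8} F + integral {1/8..3/10} F"
    using Henstock_Kurzweil_Integration.integral_combine[OF _ _ i03, of "1/8"] by simp
  have I3: "integral {3/10..1} F = (7/10) * K" using h3 by (rule integral_unique)
  have Kb: "K \<le> \<bar>c - c'\<bar> / min c c'" unfolding K_def by (rule lndiff) (use assms in auto)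
  have d0: "0 \<le> d" by (simp add: d_def)
  have arith: "d / 6 + 2 * d * (1 - ln d) \<le> d * (3 - 2 * ln d)" using d0 by (simp add: algebra_simps)
  have "integral {0..1} F \<le> d * (3 - 2 * ln d) + 0.7 * \<bar>c - c'\<bar> / min c c'"
    using s1 s2 I3 P1 P2 e1 e2 Kb arith by simp
  then show ?thesis using i01 by (simp add: F_def d_def)
qed

end
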